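(* Let $Q$ be a quiver with no oriented cycles, $\theta\in\mathbb{Z}^{Q_0}$, and $\alpha_1\ne\alpha_2\in Q_1$ arrows with $\alpha_1^-=\alpha_2^-$, $\alpha_1^+=\alpha_2^+$; let $Q'$, $F$, $F'$, $\varphi$, $\varphi'$, $\pi$ be as in the context. If $u,v\in F$ are monomials with $\varphi(u)=\varphi(v)$ and $\pi(u)=\pi(v)$, then $u-v$ lies in the ideal $J$ of $F$ generated by $\mathcal{G}_2=\{t_mt_n-t_{m+\varepsilon_2-\varepsilon_1}t_{n+\varepsilon_1-\varepsilon_2}\mid m,n\in\nabla(Q,\theta)\cap\mathbb{Z}^{Q_1},\ m(\alpha_1)>0,\ n(\alpha_2)>0\}$, where $\varepsilon_i\in\mathbb{Z}^{Q_1}$ is the characteristic function of $\alpha_i$.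
   Context: For a quiver $Q$ (vertices $Q_0$, arrows $Q_1$, $a$ from $a^-$ to $a^+$) and $\theta\in\mathbb{Z}^{Q_0}$, $\nabla(Q,\theta)=\{x\in\mathbb{R}_{\ge0}^{Q_1}\mid\forall v:\ \theta(v)=\sum_{a^+=v}x(a)-\sum_{a^-=v}x(a)\}$. $x^m=\prod_ax(a)^{m(a)}$ in $\mathbb{C}[x(a)\mid a\in Q_1]$; $\mathcal{A}(Q,\theta)$ is the subalgebra generated by $x^m$ for $m\in\nabla(Q,\theta)\cap\mathbb{Z}^{Q_1}$; $F=\mathbb{C}[t_m\mid m\in\nabla(Q,\theta)\cap\mathbb{Z}^{Q_1}]$ and $\varphi:F\to\mathcal{A}(Q,\theta)$, $t_m\mapsto x^m$. $Q'$ is obtained from $Q$ by collapsing $\alpha_1,\alpha_2$ to one arrow $\alpha$; $F'$, $\varphi'$ are defined analogously for $(Q',\theta)$. $\pi:\mathbb{Z}^{Q_1}\to\mathbb{Z}^{Q'_1}$ is $\pi(m)(\alpha)=m(\alpha_1)+m(\alpha_2)$, $\pi(m)(\beta)=m(\beta)$ for other arrows; it maps $\nabla(Q,\theta)\cap\mathbb{Z}^{Q_1}$ to $\nabla(Q',\theta)\cap\mathbb{Z}^{Q'_1}$, and $\pi:F\to F'$ is the algebra map $t_m\mapsto t_{\pi(m)}$. *)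

theory Defs
  imports Complex_Main "HOL-Library.Poly_Mapping"
begin

definition no_oriented_cycles :: "'v set \<Rightarrow> 'a set \<Rightarrow> ('a \<Rightarrow> 'v) \<Rightarrow> ('a \<Rightarrow> 'v) \<Rightarrow> bool" where
  "no_oriented_cycles Q0 Q1 src tgt \<longleftrightarrow>
     (\<forall>v. (v, v) \<notin> trancl {(src a, tgt a) | a. a \<in> Q1})"

definition lattice_pts :: "'v set \<Rightarrow> 'a set \<Rightarrow> ('a \<Rightarrow> 'v) \<Rightarrow> ('a \<Rightarrow> 'v) \<Rightarrow> ('v \<Rightarrow> int) \<Rightarrow> ('a \<Rightarrow> int) set" where
  "lattice_pts Q0 Q1 src tgt \<theta> =
     {m. (\<forall>a. a \<notin> Q1 \<longrightarrow> m a = 0) \<and> (\<forall>a\<in>Q1. 0 \<le> m a) \<and>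
         (\<forall>v\<in>Q0. \<theta> v = (\<Sum>a\<in>{a\<in>Q1. tgt a = v}. m a) - (\<Sum>a\<in>{a\<in>Q1. src a = v}. m a))}"

type_synonym ('x, 'c) mpoly = "('x \<Rightarrow>\<^sub>0 nat) \<Rightarrow>\<^sub>0 'c"

definition Var :: "'x \<Rightarrow> ('x, 'c::comm_semiring_1) mpoly" where
  "Var x = Poly_Mapping.single (Poly_Mapping.single x 1) 1"

definition poly_subst :: "('x \<Rightarrow> ('y, 'c::comm_semiring_1) mpoly) \<Rightarrow> ('x, 'c) mpoly \<Rightarrow> ('y, 'c) mpoly" where
  "poly_subst \<sigma> p = (\<Sum>(ex::'x \<Rightarrow>\<^sub>0 nat)\<in>Poly_Mapping.keys p. Poly_Mapping.single 0 (Poly_Mapping.lookup p ex :: 'c) * (\<Prod>z\<in>Poly_Mapping.keys ex. (\<sigma> z) ^ (Poly_Mapping.lookup ex z)))"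

definition poly_ring_on :: "'x set \<Rightarrow> ('x, 'c::comm_semiring_1) mpoly set" where
  "poly_ring_on V = {p. \<forall>e\<in>Poly_Mapping.keys p. Poly_Mapping.keys e \<subseteq> V}"

definition monomials_on :: "'x set \<Rightarrow> ('x, 'c::comm_semiring_1) mpoly set" where
  "monomials_on V = {Poly_Mapping.single e 1 | e. Poly_Mapping.keys e \<subseteq> V}"

inductive_set ideal_gen :: "'r::comm_ring_1 set \<Rightarrow> 'r set \<Rightarrow> 'r set" for R G where
  zero: "0 \<in> ideal_gen R G"
| step: "g \<in> G \<Longrightarrow> r \<in> R \<Longrightarrow> x \<in> ideal_gen R G \<Longrightarrow> r * g + x \<in> ideal_gen R G"

definition xmon :: "'a set \<Rightarrow> ('a \<Rightarrow> int) \<Rightarrow> ('a, complex) mpoly" where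
  "xmon Q1 m = (\<Prod>a\<in>Q1. Var a ^ nat (m a))"

definition phi_map :: "'a set \<Rightarrow> ('a \<Rightarrow> int, complex) mpoly \<Rightarrow> ('a, complex) mpoly" where
  "phi_map Q1 = poly_subst (xmon Q1)"

text \<open>Collapsing alpha1, alpha2 into one arrow; alpha1 represents the new arrow alpha,
  so Q'_1 = Q1 - {alpha2}.\<close>
definition pi_vec :: "'a \<Rightarrow> 'a \<Rightarrow> ('a \<Rightarrow> int) \<Rightarrow> ('a \<Rightarrow> int)" where
  "pi_vec \<alpha>1 \<alpha>2 m = m(\<alpha>1 := m \<alpha>1 + m \<alpha>2, \<alpha>2 := 0)"

definition pi_map :: "'a \<Rightarrow> 'a \<Rightarrow> ('a \<Rightarrow> int, complex) mpoly \<Rightarrow> ('a \<Rightarrow> int, complex) mpoly" where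
  "pi_map \<alpha>1 \<alpha>2 = poly_subst (\<lambda>m. Var (pi_vec \<alpha>1 \<alpha>2 m))"

definition eps :: "'a \<Rightarrow> ('a \<Rightarrow> int)" where
  "eps \<alpha> = (\<lambda>a. if a = \<alpha> then 1 else 0)"

definition G2 :: "('a \<Rightarrow> int) set \<Rightarrow> 'a \<Rightarrow> 'a \<Rightarrow> ('a \<Rightarrow> int, complex) mpoly set" where
  "G2 L \<alpha>1 \<alpha>2 = {Var m * Var n - Var (\<lambda>a. m a + eps \<alpha>2 a - eps \<alpha>1 a) * Var (\<lambda>a. n a + eps \<alpha>1 a - eps \<alpha>2 a)
      | m n. m \<in> L \<and> n \<in> L \<and> m \<alpha>1 > 0 \<and> n \<alpha>2 > 0}"

end

theory Submission
  imports Defs "HOL-Library.Multiset"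
begin

lemma prod_single_set:
  "(\<Prod>k\<in>S. Poly_Mapping.single (f k) (1::'c::comm_semiring_1)) = Poly_Mapping.single (\<Sum>k\<in>S. f k) 1"
proof (induction S rule: infinite_finite_induct)
  case (insert x F)
  then show ?case by (simp add: mult_single)
qed simp_all

lemma prod_single_list:
  "prod_list (map (\<lambda>x. Poly_Mapping.single (f x) (1::'c::comm_semiring_1)) xs) = Poly_Mapping.single (sum_list (map f xs)) 1"
  by (induction xs) (simp_all add: mult_single)

lemma Var_pow: "(Var a :: ('x,'c::comm_semiring_1) mpoly) ^ k = Poly_Mapping.single (Poly_Mapping.single a k) 1"
proof (induction k)
  case (Suc k)
  then show ?case by (simp add: Var_def mult_single single_add[symmetric])
qed simp

lemma xmon_single: "xmon Q1 m = Poly_Mapping.single (\<Sum>a\<in>Q1. Poly_Mapping.single a (nat (m a))) 1"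
  unfolding xmon_def Var_pow by (rule prod_single_set)

lemma poly_subst_single:
  "poly_subst \<sigma> (Poly_Mapping.single e (1::'c::comm_semiring_1)) = (\<Prod>z\<in>Poly_Mapping.keys e. \<sigma> z ^ Poly_Mapping.lookup e z)"
  unfolding poly_subst_def by simp

lemma lookup_sum_list_single:
  "Poly_Mapping.lookup (sum_list (map (\<lambda>z. Poly_Mapping.single z (1::nat)) xs)) w = count_list xs w"
  by (induction xs) (simp_all add: lookup_add lookup_single)

lemma keys_sum_list_single:
  "Poly_Mapping.keys (sum_list (map (\<lambda>z. Poly_Mapping.single z (1::nat)) xs)) = set xs"
  by (rule set_eqI) (metis in_keys_iff lookup_sum_list_single count_list_0_iff)

lemma prod_list_count:
  "prod_list (map f xs) = (\<Prod>x\<in>set xs. (f x :: 'b::comm_monoid_mult) ^ count_list xs x)"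
proof (induction xs)
  case (Cons x xs)
  show ?case
  proof cases
    assume "x \<in> set xs"
    have "prod_list (map f (x#xs)) = f x * (\<Prod>x\<in>set xs. f x ^ count_list xs x)" by (simp add: Cons.IH)
    also have "set xs = insert x (set xs - {x})" using \<open>x \<in> set xs\<close> by blast
    also have "f x * (\<Prod>x\<in>insert x (set xs - {x}). f x ^ count_list xs x)
       = f x * (f x ^ count_list xs x * (\<Prod>y\<in>set xs - {x}. f y ^ count_list xs y))"
      by (simp add: prod.insert_remove)
    also have "(\<Prod>y\<in>set xs - {x}. f y ^ count_list xs y) = (\<Prod>y\<in>set xs - {x}. f y ^ count_list (x#xs) y)"
      by (rule prod.cong) auto
    also have "f x * (f x ^ count_list xs x * (\<Prod>y\<in>set xs - {x}. f y ^ count_list (x#xs) y))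
       = f x ^ count_list (x#xs) x * (\<Prod>y\<in>set xs - {x}. f y ^ count_list (x#xs) y)"
      by (simp add: mult.assoc)
    also have "\<dots> = (\<Prod>y\<in>insert x (set xs - {x}). f y ^ count_list (x#xs) y)"
      by (simp add: prod.insert_remove)
    also have "insert x (set xs - {x}) = set (x#xs)" using \<open>x \<in> set xs\<close> by auto
    finally show ?thesis .
  next
    assume "x \<notin> set xs"
    hence "\<And>xa. xa \<in> set xs \<Longrightarrow> x \<noteq> xa" by blast
    thus ?thesis using \<open>x \<notin> set xs\<close> by (simp add: Cons.IH count_list_0_iff)
  qed
qed simp

lemma poly_subst_list:
  "poly_subst \<sigma> (Poly_Mapping.single (sum_list (map (\<lambda>z. Poly_Mapping.single z (1::nat)) xs)) (1::'c::comm_semiring_1))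
    = prod_list (map \<sigma> xs)"
  unfolding poly_subst_single keys_sum_list_single lookup_sum_list_single prod_list_count ..

lemma count_list_replicate': "count_list (replicate b a) w = (if a = w then b else 0)"
  by (induction b) auto

lemma exists_list: "\<exists>xs. e = sum_list (map (\<lambda>z. Poly_Mapping.single z (1::nat)) xs)"
proof (induction e rule: update_induct)
  case const
  then show ?case by (rule exI[of _ "[]"]) simp
next
  case (update f a b)
  then obtain xs where xs: "f = sum_list (map (\<lambda>z. Poly_Mapping.single z (1::nat)) xs)" by blast
  have "Poly_Mapping.update a b f = sum_list (map (\<lambda>z. Poly_Mapping.single z (1::nat)) (replicate b a @ xs))"
  proof (rule poly_mapping_eqI)
    fix w
    have "Poly_Mapping.lookup f a = 0" using update(1) by (simp add: in_keys_iff)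
    then show "Poly_Mapping.lookup (Poly_Mapping.update a b f) w =
       Poly_Mapping.lookup (sum_list (map (\<lambda>z. Poly_Mapping.single z (1::nat)) (replicate b a @ xs))) w"
      unfolding lookup_sum_list_single lookup_update
      using lookup_sum_list_single[of xs w] xs
      by (auto simp: count_list_replicate')
  qed
  then show ?case by blast
qed

lemma ideal_add: "a \<in> ideal_gen R G \<Longrightarrow> b \<in> ideal_gen R G \<Longrightarrow> a + b \<in> ideal_gen R G"
proof (induction a rule: ideal_gen.induct)
  case zero
  then show ?case by simp
next
  case (step g r x)
  then show ?case using ideal_gen.step[of g G r R "x + b"] by (simp add: add.assoc)
qed

lemma shift_in:
  assumes fin: "finite Q1" and m: "m \<in> lattice_pts Q0 Q1 src tgt \<theta>"
    and pq: "p \<in> Q1" "q \<in> Q1" "p \<noteq> q" "src p = src q" "tgt p = tgt q" and pos: "m p > 0"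
  shows "(\<lambda>a. m a + eps q a - eps p a) \<in> lattice_pts Q0 Q1 src tgt \<theta>"
proof -
  have m0: "\<forall>a. a \<notin> Q1 \<longrightarrow> m a = 0" and m1: "\<forall>a\<in>Q1. 0 \<le> m a"
    and m2: "\<forall>v\<in>Q0. \<theta> v = (\<Sum>a\<in>{a\<in>Q1. tgt a = v}. m a) - (\<Sum>a\<in>{a\<in>Q1. src a = v}. m a)"
    using m unfolding lattice_pts_def by auto
  have S: "(\<Sum>a\<in>S. m a + eps q a - eps p a) = (\<Sum>a\<in>S. m a)"
    if "S \<subseteq> Q1" "p \<in> S \<longleftrightarrow> q \<in> S" for S
  proof -
    have fS: "finite S" using fin that(1) finite_subset by blast
    have "(\<Sum>a\<in>S. m a + eps q a - eps p a) = (\<Sum>a\<in>S. m a) + (\<Sum>a\<in>S. eps q a) - (\<Sum>a\<in>S. eps p a)"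
      by (simp add: sum.distrib sum_subtractf)
    also have "(\<Sum>a\<in>S. eps q a) = (if q \<in> S then 1 else 0)" using fS by (simp add: eps_def)
    also have "(\<Sum>a\<in>S. eps p a) = (if p \<in> S then 1 else 0)" using fS by (simp add: eps_def)
    finally show ?thesis using that(2) by simp
  qed
  show ?thesis unfolding lattice_pts_def
  proof (intro CollectI conjI allI ballI impI)
    fix a assume "a \<notin> Q1" then show "m a + eps q a - eps p a = 0" using m0 pq by (auto simp: eps_def)
  next
    fix a assume "a \<in> Q1" then show "0 \<le> m a + eps q a - eps p a" using m1 pq pos by (auto simp: eps_def)
  next
    fix v assume "v \<in> Q0"
    have "(\<Sum>a\<in>{a\<in>Q1. tgt a = v}. m a + eps q a - eps p a) = (\<Sum>a\<in>{a\<in>Q1. tgt a = v}. m a)"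
      by (rule S) (use pq in auto)
    moreover have "(\<Sum>a\<in>{a\<in>Q1. src a = v}. m a + eps q a - eps p a) = (\<Sum>a\<in>{a\<in>Q1. src a = v}. m a)"
      by (rule S) (use pq in auto)
    ultimately show "\<theta> v = (\<Sum>a\<in>{a\<in>Q1. tgt a = v}. m a + eps q a - eps p a) - (\<Sum>a\<in>{a\<in>Q1. src a = v}. m a + eps q a - eps p a)"
      using m2 \<open>v \<in> Q0\<close> by simp
  qed
qed

lemma pi_shift1: "\<alpha>1 \<noteq> \<alpha>2 \<Longrightarrow> pi_vec \<alpha>1 \<alpha>2 (\<lambda>a. m a + eps \<alpha>2 a - eps \<alpha>1 a) = pi_vec \<alpha>1 \<alpha>2 m"
  by (auto simp: pi_vec_def eps_def fun_eq_iff)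

lemma pi_shift2: "\<alpha>1 \<noteq> \<alpha>2 \<Longrightarrow> pi_vec \<alpha>1 \<alpha>2 (\<lambda>a. m a + eps \<alpha>1 a - eps \<alpha>2 a) = pi_vec \<alpha>1 \<alpha>2 m"
  by (auto simp: pi_vec_def eps_def fun_eq_iff)

lemma pi_inj:
  assumes "\<alpha>1 \<noteq> \<alpha>2" "pi_vec \<alpha>1 \<alpha>2 x = pi_vec \<alpha>1 \<alpha>2 y" "x \<alpha>1 = y \<alpha>1"
  shows "x = y"
proof
  fix a
  have e: "pi_vec \<alpha>1 \<alpha>2 x b = pi_vec \<alpha>1 \<alpha>2 y b" for b using assms(2) by simp
  from e[of \<alpha>1] e[of a] assms(1,3) show "x a = y a"
    by (auto simp: pi_vec_def split: if_splits)
qed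

lemma prod_two: "finite S \<Longrightarrow> i \<in> S \<Longrightarrow> j \<in> S \<Longrightarrow> i \<noteq> j \<Longrightarrow>
   prod f S = f i * f j * prod f (S - {i, j})"
proof -
  assume a: "finite S" "i \<in> S" "j \<in> S" "i \<noteq> j"
  have "prod f S = f i * prod f (S - {i})" using a by (simp add: prod.remove)
  also have "prod f (S - {i}) = f j * prod f (S - {i} - {j})" using a by (intro prod.remove) auto
  also have "S - {i} - {j} = S - {i, j}" by auto
  finally show ?thesis by (simp add: mult.assoc)
qed

lemma prod_Var_ring:
  assumes "\<forall>k\<in>S. x k \<in> L"
  shows "(\<Prod>k\<in>S. (Var (x k) :: ('x, 'c::comm_semiring_1) mpoly)) \<in> poly_ring_on L"
proof -
  have "(\<Prod>k\<in>S. (Var (x k) :: ('x, 'c) mpoly)) = Poly_Mapping.single (\<Sum>k\<in>S. Poly_Mapping.single (x k) 1) 1"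
    unfolding Var_def by (rule prod_single_set)
  moreover have "Poly_Mapping.keys (\<Sum>k\<in>S. Poly_Mapping.single (x k) (1::nat)) \<subseteq> L"
  proof
    fix z assume "z \<in> Poly_Mapping.keys (\<Sum>k\<in>S. Poly_Mapping.single (x k) (1::nat))"
    then have "(\<Sum>k\<in>S. Poly_Mapping.lookup (Poly_Mapping.single (x k) (1::nat)) z) \<noteq> 0"
      by (simp add: in_keys_iff lookup_sum)
    then obtain k where "k \<in> S" "Poly_Mapping.lookup (Poly_Mapping.single (x k) (1::nat)) z \<noteq> 0"
      by (meson sum.not_neutral_contains_not_neutral)
    then show "z \<in> L" using assms by (auto simp: lookup_single when_def split: if_splits)
  qed
  ultimately show ?thesis by (simp add: poly_ring_on_def)
qed


lemma core:
  fixes x y :: "nat \<Rightarrow> ('a \<Rightarrow> int)"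
  assumes L: "L = lattice_pts Q0 Q1 src tgt \<theta>"
    and fin: "finite Q1" and a: "\<alpha>1 \<in> Q1" "\<alpha>2 \<in> Q1" "\<alpha>1 \<noteq> \<alpha>2" "src \<alpha>1 = src \<alpha>2" "tgt \<alpha>1 = tgt \<alpha>2"
    and xy: "\<forall>k<n. x k \<in> L \<and> y k \<in> L \<and> pi_vec \<alpha>1 \<alpha>2 (x k) = pi_vec \<alpha>1 \<alpha>2 (y k)"
    and s: "(\<Sum>k<n. x k \<alpha>1) = (\<Sum>k<n. y k \<alpha>1)"
  shows "(\<Prod>k<n. Var (x k)) - (\<Prod>k<n. Var (y k)) \<in> ideal_gen (poly_ring_on L) (G2 L \<alpha>1 \<alpha>2)"
  using xy s
proof (induction "\<Sum>k<n. nat \<bar>x k \<alpha>1 - y k \<alpha>1\<bar>" arbitrary: x rule: less_induct)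
  case (less x)
  have xL: "\<And>k. k < n \<Longrightarrow> x k \<in> L" and yL: "\<And>k. k < n \<Longrightarrow> y k \<in> L"
    and pxy: "\<And>k. k < n \<Longrightarrow> pi_vec \<alpha>1 \<alpha>2 (x k) = pi_vec \<alpha>1 \<alpha>2 (y k)" using less.prems by auto
  have nonneg: "\<And>z b. z \<in> L \<Longrightarrow> b \<in> Q1 \<Longrightarrow> 0 \<le> z b" using L by (auto simp: lattice_pts_def)
  have sum12: "x k \<alpha>1 + x k \<alpha>2 = y k \<alpha>1 + y k \<alpha>2" if "k < n" for k
  proof -
    have "pi_vec \<alpha>1 \<alpha>2 (x k) \<alpha>1 = pi_vec \<alpha>1 \<alpha>2 (y k) \<alpha>1" using pxy[OF that] by simp
    then show ?thesis using a(3) by (simp add: pi_vec_def)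
  qed
  show ?case
  proof (cases "\<forall>k<n. x k \<alpha>1 = y k \<alpha>1")
    case True
    then have "\<forall>k<n. x k = y k" using pi_inj[OF a(3)] pxy by blast
    then have "(\<Prod>k<n. (Var (x k) :: ('a \<Rightarrow> int, complex) mpoly)) = (\<Prod>k<n. Var (y k))" by simp
    then show ?thesis by (simp add: ideal_gen.zero)
  next
    case False
    have "\<exists>i<n. x i \<alpha>1 > y i \<alpha>1"
    proof (rule ccontr)
      assume "\<not> (\<exists>i<n. x i \<alpha>1 > y i \<alpha>1)"
      then have le: "\<forall>k\<in>{..<n}. x k \<alpha>1 \<le> y k \<alpha>1" by (meson lessThan_iff not_le)
      from False le obtain k where "k \<in> {..<n}" "x k \<alpha>1 < y k \<alpha>1" by force
      then have "(\<Sum>k<n. x k \<alpha>1) < (\<Sum>k<n. y k \<alpha>1)"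
        using le by (intro sum_strict_mono_ex1) auto
      then show False using less.prems(2) by simp
    qed
    then obtain i where i: "i < n" "x i \<alpha>1 > y i \<alpha>1" by blast
    have "\<exists>j<n. x j \<alpha>1 < y j \<alpha>1"
    proof (rule ccontr)
      assume "\<not> (\<exists>j<n. x j \<alpha>1 < y j \<alpha>1)"
      then have le: "\<forall>k\<in>{..<n}. y k \<alpha>1 \<le> x k \<alpha>1" by (meson lessThan_iff not_le)
      from False le obtain k where "k \<in> {..<n}" "y k \<alpha>1 < x k \<alpha>1" by force
      then have "(\<Sum>k<n. y k \<alpha>1) < (\<Sum>k<n. x k \<alpha>1)"
        using le by (intro sum_strict_mono_ex1) auto
      then show False using less.prems(2) by simp
    qed
    then obtain j where j: "j < n" "x j \<alpha>1 < y j \<alpha>1" by blast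
    have ij: "i \<noteq> j" using i j by auto
    define m where "m = (\<lambda>a. x i a + eps \<alpha>2 a - eps \<alpha>1 a)"
    define w where "w = (\<lambda>a. x j a + eps \<alpha>1 a - eps \<alpha>2 a)"
    define x' where "x' = x(i := m, j := w)"
    have pos1: "x i \<alpha>1 > 0" using i nonneg[OF yL[OF i(1)] a(1)] by simp
    have pos2: "x j \<alpha>2 > 0" using j sum12[OF j(1)] nonneg[OF yL[OF j(1)] a(2)] by simp
    have mL: "m \<in> L" unfolding m_def L
      using shift_in[of Q1 "x i" Q0 src tgt \<theta> \<alpha>1 \<alpha>2] fin a pos1 xL[OF i(1)] L by simp
    have wL: "w \<in> L" unfolding w_def L
      using shift_in[of Q1 "x j" Q0 src tgt \<theta> \<alpha>2 \<alpha>1] fin a pos2 xL[OF j(1)] L by simp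
    have m1: "m \<alpha>1 = x i \<alpha>1 - 1" and w1: "w \<alpha>1 = x j \<alpha>1 + 1"
      using a(3) by (auto simp: m_def w_def eps_def)
    have x'1: "x' k \<alpha>1 = x k \<alpha>1 + (if k = j then 1 else 0) - (if k = i then 1 else 0)" for k
      using ij m1 w1 by (auto simp: x'_def)
    have prems': "\<forall>k<n. x' k \<in> L \<and> y k \<in> L \<and> pi_vec \<alpha>1 \<alpha>2 (x' k) = pi_vec \<alpha>1 \<alpha>2 (y k)"
      using xL yL pxy mL wL pi_shift1[OF a(3), of "x i"] pi_shift2[OF a(3), of "x j"] i(1) j(1)
      by (auto simp: x'_def m_def w_def)
    have s': "(\<Sum>k<n. x' k \<alpha>1) = (\<Sum>k<n. y k \<alpha>1)"
    proof -
      have "(\<Sum>k<n. x' k \<alpha>1) = (\<Sum>k<n. x k \<alpha>1) + (\<Sum>k<n. (if k = j then 1 else 0)) - (\<Sum>k<n. (if k = i then 1 else 0))"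
        unfolding x'1 by (simp add: sum.distrib sum_subtractf)
      also have "\<dots> = (\<Sum>k<n. x k \<alpha>1)" using i(1) j(1) by simp
      finally show ?thesis using less.prems(2) by simp
    qed
    have meas: "nat \<bar>x k \<alpha>1 - y k \<alpha>1\<bar> = nat \<bar>x' k \<alpha>1 - y k \<alpha>1\<bar> + (if k = i then 1 else 0) + (if k = j then 1 else 0)" for k
      using i j ij unfolding x'1 by auto
    have "(\<Sum>k<n. nat \<bar>x k \<alpha>1 - y k \<alpha>1\<bar>) = (\<Sum>k<n. nat \<bar>x' k \<alpha>1 - y k \<alpha>1\<bar>) + (\<Sum>k<n. (if k = i then 1 else 0)) + (\<Sum>k<n. (if k = j then 1 else 0))"
      unfolding meas by (simp add: sum.distrib)
    then have lt: "(\<Sum>k<n. nat \<bar>x' k \<alpha>1 - y k \<alpha>1\<bar>) < (\<Sum>k<n. nat \<bar>x k \<alpha>1 - y k \<alpha>1\<bar>)"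
      using i(1) j(1) by simp
    have IH: "(\<Prod>k<n. Var (x' k)) - (\<Prod>k<n. Var (y k)) \<in> ideal_gen (poly_ring_on L) (G2 L \<alpha>1 \<alpha>2)"
      using less.hyps[OF lt prems' s'] .
    define R where "R = (\<Prod>k\<in>{..<n} - {i, j}. (Var (x k) :: ('a \<Rightarrow> int, complex) mpoly))"
    have R': "R = (\<Prod>k\<in>{..<n} - {i, j}. Var (x' k))" unfolding R_def x'_def
      by (rule prod.cong) auto
    have P1: "(\<Prod>k<n. (Var (x k) :: ('a \<Rightarrow> int, complex) mpoly)) = Var (x i) * Var (x j) * R"
      unfolding R_def using i(1) j(1) ij by (intro prod_two) auto
    have P2: "(\<Prod>k<n. (Var (x' k) :: ('a \<Rightarrow> int, complex) mpoly)) = Var m * Var w * R"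
    proof -
      have "(\<Prod>k<n. (Var (x' k) :: ('a \<Rightarrow> int, complex) mpoly)) = Var (x' i) * Var (x' j) * R"
        unfolding R' using i(1) j(1) ij by (intro prod_two) auto
      then show ?thesis using ij by (simp add: x'_def)
    qed
    have g: "Var (x i) * Var (x j) - Var m * Var w \<in> G2 L \<alpha>1 \<alpha>2"
      unfolding G2_def m_def w_def using xL[OF i(1)] xL[OF j(1)] pos1 pos2 by blast
    have RL: "R \<in> poly_ring_on L" unfolding R_def by (rule prod_Var_ring) (use xL in auto)
    have "(\<Prod>k<n. (Var (x k) :: ('a \<Rightarrow> int, complex) mpoly)) - (\<Prod>k<n. Var (x' k))
        = R * (Var (x i) * Var (x j) - Var m * Var w) + 0"
      unfolding P1 P2 by (simp add: algebra_simps)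
    also have "\<dots> \<in> ideal_gen (poly_ring_on L) (G2 L \<alpha>1 \<alpha>2)"
      by (rule ideal_gen.step[OF g RL ideal_gen.zero])
    finally have D: "(\<Prod>k<n. (Var (x k) :: ('a \<Rightarrow> int, complex) mpoly)) - (\<Prod>k<n. Var (x' k)) \<in> ideal_gen (poly_ring_on L) (G2 L \<alpha>1 \<alpha>2)" .
    have "(\<Prod>k<n. (Var (x k) :: ('a \<Rightarrow> int, complex) mpoly)) - (\<Prod>k<n. Var (y k)) =
       ((\<Prod>k<n. Var (x k)) - (\<Prod>k<n. Var (x' k))) + ((\<Prod>k<n. Var (x' k)) - (\<Prod>k<n. Var (y k)))"
      by simp
    then show ?thesis using ideal_add[OF D IH] by simp
  qed
qed


lemma match_lists:
  "mset (map p xs) = mset (map p ys) \<Longrightarrow> \<exists>ys'. mset ys' = mset ys \<and> map p ys' = map p xs"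
proof (induction xs arbitrary: ys)
  case Nil
  then show ?case by simp
next
  case (Cons x xs ys)
  have "p x \<in># mset (map p ys)" unfolding Cons.prems[symmetric] by simp
  then obtain y where y: "y \<in> set ys" "p y = p x" by auto
  have "mset (map p (remove1 y ys)) = mset (map p ys) - {#p y#}"
    using y(1) by (simp add: image_mset_Diff mset_map)
  also have "\<dots> = mset (map p xs)"
  proof -
    have h: "mset (map p ys) = add_mset (p y) (mset (map p xs))" using Cons.prems y(2) by simp
    show ?thesis unfolding h by simp
  qed
  finally obtain zs where zs: "mset zs = mset (remove1 y ys)" "map p zs = map p xs"
    using Cons.IH by metis
  have "mset (y # zs) = mset ys" using zs(1) y(1) by simp
  moreover have "map p (y # zs) = map p (x # xs)" using zs(2) y(2) by simp
  ultimately show ?case by blast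
qed

lemma prod_list_mset: fixes f :: "'a \<Rightarrow> 'b::comm_monoid_mult" assumes h: "mset a = mset b" shows "prod_list (map f a) = prod_list (map f b)"
proof -
  have "prod_list (map f a) = prod_mset (mset (map f a))" by (simp only: prod_mset_prod_list)
  also have "\<dots> = prod_mset (mset (map f b))" by (simp only: mset_map h)
  also have "\<dots> = prod_list (map f b)" by (simp only: prod_mset_prod_list)
  finally show ?thesis .
qed

lemma sum_list_mset: fixes f :: "'a \<Rightarrow> 'b::comm_monoid_add" assumes h: "mset a = mset b" shows "sum_list (map f a) = sum_list (map f b)"
proof -
  have "sum_list (map f a) = sum_mset (mset (map f a))" by (simp only: sum_mset_sum_list)
  also have "\<dots> = sum_mset (mset (map f b))" by (simp only: mset_map h)
  also have "\<dots> = sum_list (map f b)" by (simp only: sum_mset_sum_list)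
  finally show ?thesis .
qed

lemma prod_list_nth: "prod_list (map f xs) = (\<Prod>k<length xs. f (xs!k))"
  by (induction xs) (simp_all add: prod.lessThan_Suc_shift del: prod.lessThan_Suc sum.lessThan_Suc)

lemma sum_list_nth: "sum_list (map f xs) = (\<Sum>k<length xs. f (xs!k))"
  by (induction xs) (simp_all add: sum.lessThan_Suc_shift del: prod.lessThan_Suc sum.lessThan_Suc)

lemma lookup_sum_list: "Poly_Mapping.lookup (sum_list zs) k = sum_list (map (\<lambda>p. Poly_Mapping.lookup p k) zs)"
  by (induction zs) (simp_all add: lookup_add)

lemma single_eq_keys: "Poly_Mapping.single E (1::'c::zero_neq_one) = Poly_Mapping.single E' 1 \<Longrightarrow> E = E'"
proof -
  assume h: "Poly_Mapping.single E (1::'c) = Poly_Mapping.single E' 1"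
  have "{E} = {E'}" using arg_cong[OF h, of Poly_Mapping.keys] by simp
  then show ?thesis by simp
qed

theorem lemma9p5:
  fixes Q0 :: "'v set" and Q1 :: "'a set" and src tgt :: "'a \<Rightarrow> 'v"
    and \<theta> :: "'v \<Rightarrow> int" and \<alpha>1 \<alpha>2 :: 'a
    and u v :: "('a \<Rightarrow> int, complex) mpoly"
  assumes "finite Q0" and "finite Q1"
    and "\<forall>a\<in>Q1. src a \<in> Q0 \<and> tgt a \<in> Q0"
    and "no_oriented_cycles Q0 Q1 src tgt"
    and "\<alpha>1 \<in> Q1" and "\<alpha>2 \<in> Q1" and "\<alpha>1 \<noteq> \<alpha>2"
    and "src \<alpha>1 = src \<alpha>2" and "tgt \<alpha>1 = tgt \<alpha>2"
    and "u \<in> monomials_on (lattice_pts Q0 Q1 src tgt \<theta>)"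
    and "v \<in> monomials_on (lattice_pts Q0 Q1 src tgt \<theta>)"
    and "phi_map Q1 u = phi_map Q1 v"
    and "pi_map \<alpha>1 \<alpha>2 u = pi_map \<alpha>1 \<alpha>2 v"
  shows "u - v \<in> ideal_gen (poly_ring_on (lattice_pts Q0 Q1 src tgt \<theta>))
                   (G2 (lattice_pts Q0 Q1 src tgt \<theta>) \<alpha>1 \<alpha>2)"
proof -
  define L where "L = lattice_pts Q0 Q1 src tgt \<theta>"
  define X where "X = (\<lambda>z::'a \<Rightarrow> int. \<Sum>a\<in>Q1. Poly_Mapping.single a (nat (z a)))"
  have mono: "\<exists>xs. set xs \<subseteq> L \<and> w = prod_list (map Var xs)
     \<and> phi_map Q1 w = Poly_Mapping.single (sum_list (map X xs)) 1
     \<and> pi_map \<alpha>1 \<alpha>2 w = Poly_Mapping.single (sum_list (map (\<lambda>z. Poly_Mapping.single z 1) (map (pi_vec \<alpha>1 \<alpha>2) xs))) 1"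
    if wm: "w \<in> monomials_on L" for w
  proof -
    obtain e where e: "w = Poly_Mapping.single e 1" "Poly_Mapping.keys e \<subseteq> L"
      using wm by (auto simp: monomials_on_def)
    obtain xs where xs: "e = sum_list (map (\<lambda>z. Poly_Mapping.single z (1::nat)) xs)"
      using exists_list by blast
    have "set xs \<subseteq> L" using e(2) xs keys_sum_list_single by metis
    moreover have "w = prod_list (map Var xs)"
      unfolding e(1) xs Var_def by (rule prod_single_list[symmetric])
    moreover have "phi_map Q1 w = Poly_Mapping.single (sum_list (map X xs)) 1"
    proof -
      have "phi_map Q1 w = prod_list (map (xmon Q1) xs)"
        unfolding phi_map_def e(1) xs by (rule poly_subst_list)
      also have "map (xmon Q1) xs = map (\<lambda>z. Poly_Mapping.single (X z) 1) xs"
        by (simp add: xmon_single X_def)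
      finally show ?thesis by (simp add: prod_single_list)
    qed
    moreover have "pi_map \<alpha>1 \<alpha>2 w = Poly_Mapping.single (sum_list (map (\<lambda>z. Poly_Mapping.single z 1) (map (pi_vec \<alpha>1 \<alpha>2) xs))) 1"
    proof -
      have "pi_map \<alpha>1 \<alpha>2 w = prod_list (map (\<lambda>m. Var (pi_vec \<alpha>1 \<alpha>2 m)) xs)"
        unfolding pi_map_def e(1) xs by (rule poly_subst_list)
      also have "\<dots> = Poly_Mapping.single (sum_list (map (\<lambda>z. Poly_Mapping.single (pi_vec \<alpha>1 \<alpha>2 z) 1) xs)) 1"
        unfolding Var_def by (rule prod_single_list)
      finally show ?thesis by (simp add: o_def)
    qed
    ultimately show ?thesis by blast
  qed
  obtain xs where xs: "set xs \<subseteq> L" "u = prod_list (map Var xs)"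
     "phi_map Q1 u = Poly_Mapping.single (sum_list (map X xs)) 1"
     "pi_map \<alpha>1 \<alpha>2 u = Poly_Mapping.single (sum_list (map (\<lambda>z. Poly_Mapping.single z 1) (map (pi_vec \<alpha>1 \<alpha>2) xs))) 1"
    using mono[of u] assms(10) L_def by blast
  obtain ys where ys: "set ys \<subseteq> L" "v = prod_list (map Var ys)"
     "phi_map Q1 v = Poly_Mapping.single (sum_list (map X ys)) 1"
     "pi_map \<alpha>1 \<alpha>2 v = Poly_Mapping.single (sum_list (map (\<lambda>z. Poly_Mapping.single z 1) (map (pi_vec \<alpha>1 \<alpha>2) ys))) 1"
    using mono[of v] assms(11) L_def by blast
  have E1: "sum_list (map X xs) = sum_list (map X ys)"
  proof (rule single_eq_keys)
    show "Poly_Mapping.single (sum_list (map X xs)) (1::complex) = Poly_Mapping.single (sum_list (map X ys)) 1"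
      using assms(12) unfolding xs(3) ys(3) .
  qed
  have E2: "sum_list (map (\<lambda>z. Poly_Mapping.single z (1::nat)) (map (pi_vec \<alpha>1 \<alpha>2) xs))
      = sum_list (map (\<lambda>z. Poly_Mapping.single z 1) (map (pi_vec \<alpha>1 \<alpha>2) ys))"
  proof (rule single_eq_keys)
    show "Poly_Mapping.single (sum_list (map (\<lambda>z. Poly_Mapping.single z (1::nat)) (map (pi_vec \<alpha>1 \<alpha>2) xs))) (1::complex)
      = Poly_Mapping.single (sum_list (map (\<lambda>z. Poly_Mapping.single z 1) (map (pi_vec \<alpha>1 \<alpha>2) ys))) 1"
      using assms(13) unfolding xs(4) ys(4) .
  qed
  have "mset (map (pi_vec \<alpha>1 \<alpha>2) xs) = mset (map (pi_vec \<alpha>1 \<alpha>2) ys)"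
  proof (rule multiset_eqI)
    fix w
    show "count (mset (map (pi_vec \<alpha>1 \<alpha>2) xs)) w = count (mset (map (pi_vec \<alpha>1 \<alpha>2) ys)) w"
      using arg_cong[OF E2, of "\<lambda>p. Poly_Mapping.lookup p w"]
      unfolding lookup_sum_list_single count_mset .
  qed
  then obtain ys' where ys': "mset ys' = mset ys" "map (pi_vec \<alpha>1 \<alpha>2) ys' = map (pi_vec \<alpha>1 \<alpha>2) xs"
    using match_lists by blast
  have len: "length ys' = length xs" using arg_cong[OF ys'(2), of length] by simp
  have setys': "set ys' = set ys" using arg_cong[OF ys'(1), of set_mset] by simp
  have lX: "Poly_Mapping.lookup (X z) \<alpha>1 = nat (z \<alpha>1)" for z
    unfolding X_def lookup_sum using assms(2,5) by (simp add: lookup_single when_def)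
  have "sum_list (map (\<lambda>z. nat (z \<alpha>1)) xs) = sum_list (map (\<lambda>z. nat (z \<alpha>1)) ys)"
    using arg_cong[OF E1, of "\<lambda>p. Poly_Mapping.lookup p \<alpha>1"]
    unfolding lookup_sum_list by (simp add: o_def lX)
  also have "\<dots> = sum_list (map (\<lambda>z. nat (z \<alpha>1)) ys')" by (rule sum_list_mset[OF ys'(1), symmetric])
  finally have natsum: "(\<Sum>k<length xs. nat ((xs!k) \<alpha>1)) = (\<Sum>k<length xs. nat ((ys'!k) \<alpha>1))"
    unfolding sum_list_nth len .
  have nonneg: "\<And>z. z \<in> L \<Longrightarrow> 0 \<le> z \<alpha>1" using assms(5) by (auto simp: L_def lattice_pts_def)
  have xsL: "\<forall>k<length xs. xs!k \<in> L" using xs(1) by auto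
  have ysL: "\<forall>k<length xs. ys'!k \<in> L"
  proof (intro allI impI)
    fix k assume "k < length xs"
    then have "ys'!k \<in> set ys'" using len by simp
    then show "ys'!k \<in> L" using ys(1) setys' by blast
  qed
  have intsum: "(\<Sum>k<length xs. (xs!k) \<alpha>1) = (\<Sum>k<length xs. (ys'!k) \<alpha>1)"
  proof -
    have "(\<Sum>k<length xs. (xs!k) \<alpha>1) = (\<Sum>k<length xs. int (nat ((xs!k) \<alpha>1)))"
      using xsL nonneg by (intro sum.cong) auto
    also have "\<dots> = int (\<Sum>k<length xs. nat ((xs!k) \<alpha>1))" by simp
    also have "\<dots> = int (\<Sum>k<length xs. nat ((ys'!k) \<alpha>1))" using natsum by simp
    also have "\<dots> = (\<Sum>k<length xs. int (nat ((ys'!k) \<alpha>1)))" by simp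
    also have "\<dots> = (\<Sum>k<length xs. (ys'!k) \<alpha>1)"
      using ysL nonneg by (intro sum.cong) auto
    finally show ?thesis .
  qed
  have pieq: "\<forall>k<length xs. pi_vec \<alpha>1 \<alpha>2 (xs!k) = pi_vec \<alpha>1 \<alpha>2 (ys'!k)"
  proof (intro allI impI)
    fix k assume k: "k < length xs"
    have "map (pi_vec \<alpha>1 \<alpha>2) ys' ! k = map (pi_vec \<alpha>1 \<alpha>2) xs ! k" using ys'(2) by simp
    then show "pi_vec \<alpha>1 \<alpha>2 (xs!k) = pi_vec \<alpha>1 \<alpha>2 (ys'!k)" using k len by simp
  qed
  have C: "(\<Prod>k<length xs. Var (xs!k)) - (\<Prod>k<length xs. Var (ys'!k)) \<in> ideal_gen (poly_ring_on L) (G2 L \<alpha>1 \<alpha>2)"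
    by (rule core[OF L_def assms(2,5,6,7,8,9)]) (use xsL ysL pieq intsum in auto)
  have "u = (\<Prod>k<length xs. Var (xs!k))" using xs(2) by (simp add: prod_list_nth)
  moreover have "v = (\<Prod>k<length xs. Var (ys'!k))"
  proof -
    have "v = prod_list (map Var ys')" unfolding ys(2) by (rule prod_list_mset[OF ys'(1), symmetric])
    also have "\<dots> = (\<Prod>k<length ys'. Var (ys'!k))" by (rule prod_list_nth)
    finally show ?thesis using len by simp
  qed
  ultimately show ?thesis using C L_def by simp
qed

end
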